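(* Let $G(\circ)$, $G(\ast)$ be groups on $G$ and $a\in G$ with $\mathrm{dist}_a>0$ and $|a|_\circ=|a|_\ast$. Then $\mathrm{dist}_a\ge 3$.
   Context: $|a|_\circ$, $|a|_\ast$ are the orders of $a$ in $G(\circ)$, $G(\ast)$. $\mathrm{dist}_a=|\{b\in G: a\circ b\ne a\ast b\}|$. *)

theory Defs
  imports "HOL-Algebra.Algebra"
begin

definition dist_at :: "('a, 'm) monoid_scheme \<Rightarrow> ('a, 'n) monoid_scheme \<Rightarrow> 'a \<Rightarrow> nat" where
  "dist_at G1 G2 a = card {b \<in> carrier G1. a \<otimes>\<^bsub>G1\<^esub> b \<noteq> a \<otimes>\<^bsub>G2\<^esub> b}"

end

theory Submission
  imports Defs
begin

lemma key_abs:
  fixes f g :: "'a \<Rightarrow> 'a" and S :: "'a set"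
  assumes n: "n > 0"
    and fS: "\<And>x. x \<in> S \<Longrightarrow> f x \<in> S"
    and fper: "\<And>x. x \<in> S \<Longrightarrow> (f^^n) x = x"
    and gper: "\<And>x. x \<in> S \<Longrightarrow> (g^^n) x = x"
    and fnf: "\<And>x k. x \<in> S \<Longrightarrow> 0 < k \<Longrightarrow> k < n \<Longrightarrow> (f^^k) x \<noteq> x"
    and gnf: "\<And>x k. x \<in> S \<Longrightarrow> 0 < k \<Longrightarrow> k < n \<Longrightarrow> (g^^k) x \<noteq> x"
    and b: "b \<in> S" and c: "c \<in> S" and bc: "b \<noteq> c"
    and agree: "\<And>x. x \<in> S \<Longrightarrow> x \<noteq> b \<Longrightarrow> x \<noteq> c \<Longrightarrow> f x = g x"
    and gbc: "g b = f c" and gcb: "g c = f b"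
  shows False
proof -
  have fpS: "(f^^i) x \<in> S" if "x \<in> S" for i x
    using that by (induction i) (auto intro: fS)
  have fadd: "(f^^(i+j)) x = (f^^i) ((f^^j) x)" for i j x
    by (simp add: funpow_add)
  show False
  proof (cases "\<exists>j<n. (f^^j) b = c")
    case True
    then obtain j where j: "j < n" "(f^^j) b = c" by blast
    have j0: "j > 0" using j bc by (cases j) auto
    have claim: "(g^^i) c = (f^^i) b" if "1 \<le> i" "i \<le> j" for i
      using that
    proof (induction i)
      case 0 then show ?case by simp
    next
      case (Suc i)
      show ?case
      proof (cases "i = 0")
        case True then show ?thesis using gcb by simp
      next
        case False
        have IH: "(g^^i) c = (f^^i) b" using Suc False by simp
        have ne_b: "(f^^i) b \<noteq> b" using fnf[OF b, of i] False Suc j by simp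
        have ne_c: "(f^^i) b \<noteq> c"
        proof
          assume h: "(f^^i) b = c"
          have "(f^^(j-i)) c = c"
            using fadd[of "j-i" i b] h j Suc by simp
          then show False using fnf[OF c, of "j-i"] Suc j by simp
        qed
        have "(g^^Suc i) c = g ((f^^i) b)" using IH by simp
        also have "\<dots> = f ((f^^i) b)" using agree[OF fpS[OF b] ne_b ne_c] by simp
        finally show ?thesis by simp
      qed
    qed
    have "(g^^j) c = c" using claim[of j] j0 j by simp
    then show False using gnf[OF c j0 j(1)] by simp
  next
    case False
    have claim: "(g^^i) b = (f^^i) c" if "1 \<le> i" "i \<le> n" for i
      using that
    proof (induction i)
      case 0 then show ?case by simp
    next
      case (Suc i)
      show ?case
      proof (cases "i = 0")
        case True then show ?thesis using gbc by simp
      next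
        case i0: False
        have IH: "(g^^i) b = (f^^i) c" using Suc i0 by simp
        have ne_c: "(f^^i) c \<noteq> c" using fnf[OF c, of i] i0 Suc by simp
        have ne_b: "(f^^i) c \<noteq> b"
        proof
          assume h: "(f^^i) c = b"
          have "(f^^(n-i)) b = (f^^n) c"
            using fadd[of "n-i" i c] h Suc by simp
          also have "\<dots> = c" using fper[OF c] .
          finally show False using False Suc i0 by (metis diff_less less_imp_le_nat n not_gr_zero)
        qed
        have "(g^^Suc i) b = g ((f^^i) c)" using IH by simp
        also have "\<dots> = f ((f^^i) c)" using agree[OF fpS[OF c] ne_b ne_c] by simp
        finally show ?thesis by simp
      qed
    qed
    have "(g^^n) b = c" using claim[of n] n fper[OF c] by simp
    then show False using gper[OF b] bc by simp
  qed
qed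

lemma (in group) iter_mult:
  assumes "a \<in> carrier G" "x \<in> carrier G"
  shows "((\<lambda>y. a \<otimes> y)^^k) x = a [^] k \<otimes> x"
  using assms
proof (induction k)
  case 0 then show ?case by simp
next
  case (Suc k)
  have "((\<lambda>y. a \<otimes> y)^^Suc k) x = a \<otimes> (((\<lambda>y. a \<otimes> y)^^k) x)" by simp
  also have "\<dots> = a \<otimes> (a [^] k \<otimes> x)" using Suc by simp
  also have "\<dots> = a [^] Suc k \<otimes> x" using Suc.prems by (subst nat_pow_Suc2) (simp_all add: m_assoc)
  finally show ?case .
qed

lemma (in group) iter_fix:
  assumes "a \<in> carrier G" "x \<in> carrier G"
  shows "((\<lambda>y. a \<otimes> y)^^k) x = x \<longleftrightarrow> ord a dvd k"
proof -
  have "a [^] k \<otimes> x = x \<longleftrightarrow> a [^] k = \<one>"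
    using assms by (metis l_one nat_pow_closed one_closed r_cancel_one')
  then show ?thesis using iter_mult[OF assms] pow_eq_id[OF assms(1)] by simp
qed

lemma (in group) bij_mult:
  assumes "a \<in> carrier G" "y \<in> carrier G"
  shows "inv a \<otimes> y \<in> carrier G \<and> a \<otimes> (inv a \<otimes> y) = y"
  using assms by (simp add: m_assoc[symmetric])

theorem lemma4p13:
  fixes G1 :: "('a, 'm) monoid_scheme" and G2 :: "('a, 'n) monoid_scheme" and a :: 'a
  assumes "group G1" and "group G2"
    and "carrier G1 = carrier G2"
    and "finite (carrier G1)"
    and "a \<in> carrier G1"
    and "dist_at G1 G2 a > 0"
    and "group.ord G1 a = group.ord G2 a"
  shows "dist_at G1 G2 a \<ge> 3"
proof (rule ccontr)
  interpret A: group G1 by fact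
  interpret B: group G2 by fact
  let ?S = "carrier G1"
  let ?f = "\<lambda>y. a \<otimes>\<^bsub>G1\<^esub> y"
  let ?g = "\<lambda>y. a \<otimes>\<^bsub>G2\<^esub> y"
  define D where "D = {b \<in> ?S. ?f b \<noteq> ?g b}"
  let ?n = "A.ord a"
  have a2: "a \<in> carrier G2" using assms by simp
  have n: "?n > 0" using A.ord_ge_1[OF assms(4) assms(5)] by simp
  have finD: "finite D" using assms(4) unfolding D_def by simp
  have agree: "?f x = ?g x" if "x \<in> ?S" "x \<notin> D" for x using that unfolding D_def by auto
  have inD: "?f x \<noteq> ?g x" if "x \<in> D" for x using that unfolding D_def by auto
  have DS: "D \<subseteq> ?S" unfolding D_def by auto
  have surj: "\<exists>y\<in>?S. ?f y = ?g x" if "x \<in> ?S" for x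
    using A.bij_mult[OF assms(5), of "?g x"] that a2 assms(3) B.m_closed
    by (metis (no_types, lifting))
  have ginj: "x = y" if "x \<in> ?S" "y \<in> ?S" "?g x = ?g y" for x y
    using that a2 assms(3) B.l_cancel by metis
  have fper: "(?f^^?n) x = x" if "x \<in> ?S" for x
    using A.iter_fix[OF assms(5) that] by simp
  have gper: "(?g^^?n) x = x" if "x \<in> ?S" for x
    using B.iter_fix[OF a2] that assms(3,7) by simp
  have fnf: "(?f^^k) x \<noteq> x" if "x \<in> ?S" "0 < k" "k < ?n" for x k
    using A.iter_fix[OF assms(5) that(1)] that by (auto dest: dvd_imp_le)
  have gnf: "(?g^^k) x \<noteq> x" if "x \<in> ?S" "0 < k" "k < ?n" for x k
    using B.iter_fix[OF a2, of x k] that assms(3,7) by (auto dest: dvd_imp_le)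
  assume "\<not> 3 \<le> dist_at G1 G2 a"
  then have "card D = 1 \<or> card D = 2" using assms(6) unfolding dist_at_def D_def by auto
  then show False
  proof
    assume "card D = 1"
    then obtain b where Db: "D = {b}" by (meson card_1_singletonE)
    then have b: "b \<in> ?S" using DS by auto
    obtain y where y: "y \<in> ?S" "?f y = ?g b" using surj[OF b] by blast
    have "y \<noteq> b" using y inD Db by auto
    then have "?g y = ?g b" using agree[OF y(1)] y Db by auto
    then show False using ginj[OF y(1) b] \<open>y \<noteq> b\<close> by simp
  next
    assume "card D = 2"
    then obtain b c where Dbc: "D = {b, c}" "b \<noteq> c" by (meson card_2_iff)
    then have b: "b \<in> ?S" and c: "c \<in> ?S" using DS by auto
    have swap: "?g u = ?f v" if "u \<in> D" "v \<in> D" "u \<noteq> v" for u v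
    proof -
      have u: "u \<in> ?S" using that DS by auto
      obtain y where y: "y \<in> ?S" "?f y = ?g u" using surj[OF u] by blast
      have "y \<noteq> u" using y inD that by auto
      moreover have "y \<in> D"
      proof (rule ccontr)
        assume "y \<notin> D"
        then have "?g y = ?g u" using agree[OF y(1)] y by auto
        then show False using ginj[OF y(1) u] \<open>y \<noteq> u\<close> by simp
      qed
      ultimately have "y = v" using that Dbc by auto
      then show ?thesis using y by simp
    qed
    show False
      apply (rule key_abs[where f = ?f and g = ?g and S = ?S and n = ?n and b = b and c = c])
      using n fper gper fnf gnf b c Dbc agree swap A.m_closed[OF assms(5)]
      by auto
  qed
qed

end
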